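(* Let $\mathcal A_{ML}$ be the MLMC estimator based on $\{X_\ell\}$ satisfying Assumption A, and suppose Assumption B holds. Then $$\lim_{\epsilon\downarrow0}\frac{\mathrm{Var}(\mathcal A_{ML}(\epsilon))}{\epsilon^2}=1.$$
   Context: Let $(\Omega,\mathcal F,\mathbb P)$ be a probability space, $X\in L^2(\Omega)$ a real random variable and $\{X_\ell\}_{\ell=-1}^\infty\subset L^2(\Omega)$ with $X_{-1}:=0$. Put $\Delta_\ell X:=X_\ell-X_{\ell-1}$, $V_\ell:=\mathrm{Var}(\Delta_\ell X)$, and let $C_\ell>0$ denote the (given) cost of sampling $\Delta_\ell X$. Assumption A: there are positive constants $\alpha,\beta,\gamma$ with $\min(\beta,\gamma)\le 2\alpha$, and $c_\alpha>0$, such that for all $\ell\in\mathbb N_0$: $|\mathbb E[X-X_\ell]|\le c_\alpha e^{-\alpha\ell}$; $V_\ell\le C e^{-\beta\ell}$ for some constant $C>0$; and $c e^{\gamma\ell}<C_\ell<C' e^{\gamma\ell}$ for constants $0<c<C'$. Define $S_k:=\sum_{\ell=0}^k\sqrt{V_\ell C_\ell}$. MLMC estimator: for $\epsilon>0$, $L(\epsilon):=\max(\lceil \log(c_\alpha\epsilon^{-1})/\alpha\rceil,1)$, $M_\ell(\epsilon):=\max\big(\lceil \epsilon^{-2}\sqrt{V_\ell/C_\ell}\,S_{L(\epsilon)}\rceil,1\big)$, and $\mathcal A_{ML}(\epsilon):=\sum_{\ell=0}^{L(\epsilon)}\frac{1}{M_\ell(\epsilon)}\sum_{i=1}^{M_\ell(\epsilon)}\Delta_\ell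 X^i$, where the family $\{\Delta_\ell X^i\}$ is mutually independent and each $\Delta_\ell X^i$ has the law of $\Delta_\ell X$. Conventions: $0\cdot(\pm\infty)=0$, $0/0=0$. Assumption B: $V_0>0$; if $\beta=\gamma$ then $\lim_{k\to\infty}S_k=\infty$; if $\gamma>\beta$ then $\beta<2\alpha$ and there exists $\upsilon\in[\beta,2\alpha)$ with $\liminf_{k\to\infty}S_k e^{(\upsilon-\gamma)k/2}>1$. *)

theory Defs
  imports "HOL-Probability.Probability"
begin

definition dX :: "(nat \<Rightarrow> 'a \<Rightarrow> real) \<Rightarrow> nat \<Rightarrow> 'a \<Rightarrow> real" where
  "dX Xl l = (\<lambda>\<omega>. Xl l \<omega> - (if l = 0 then 0 else Xl (l - 1) \<omega>))"

definition Vlev :: "'a measure \<Rightarrow> (nat \<Rightarrow> 'a \<Rightarrow> real) \<Rightarrow> nat \<Rightarrow> real" where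
  "Vlev P Xl l = prob_space.variance P (dX Xl l)"

definition Ssum :: "(nat \<Rightarrow> real) \<Rightarrow> (nat \<Rightarrow> real) \<Rightarrow> nat \<Rightarrow> real" where
  "Ssum V Cl k = (\<Sum>l\<le>k. sqrt (V l * Cl l))"

definition Leps :: "real \<Rightarrow> real \<Rightarrow> real \<Rightarrow> nat" where
  "Leps calpha alpha eps = nat (max \<lceil>ln (calpha / eps) / alpha\<rceil> 1)"

definition Meps :: "(nat \<Rightarrow> real) \<Rightarrow> (nat \<Rightarrow> real) \<Rightarrow> real \<Rightarrow> real \<Rightarrow> real \<Rightarrow> nat \<Rightarrow> nat" where
  "Meps V Cl calpha alpha eps l =
     nat (max \<lceil>(1 / eps\<^sup>2) * sqrt (V l / Cl l) * Ssum V Cl (Leps calpha alpha eps)\<rceil> 1)"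

definition AML :: "(nat \<Rightarrow> real) \<Rightarrow> (nat \<Rightarrow> real) \<Rightarrow> real \<Rightarrow> real \<Rightarrow>
    (nat \<Rightarrow> nat \<Rightarrow> 'b \<Rightarrow> real) \<Rightarrow> real \<Rightarrow> 'b \<Rightarrow> real" where
  "AML V Cl calpha alpha Y eps =
     (\<lambda>\<omega>. \<Sum>l\<le>Leps calpha alpha eps.
        (1 / real (Meps V Cl calpha alpha eps l)) *
        (\<Sum>i\<in>{1..Meps V Cl calpha alpha eps l}. Y l i \<omega>))"

end

theory Submission
  imports Defs "HOL-Real_Asymp.Real_Asymp"
begin

lemma (in prob_space) var_sum_indep:
  fixes Z :: "'i \<Rightarrow> 'a \<Rightarrow> real"
  assumes fin: "finite I" and ind: "indep_vars (\<lambda>_. borel) Z I"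
    and sq: "\<And>i. i \<in> I \<Longrightarrow> integrable M (\<lambda>x. (Z i x)\<^sup>2)"
  shows "variance (\<lambda>x. \<Sum>i\<in>I. Z i x) = (\<Sum>i\<in>I. variance (Z i))"
proof -
  have meas: "Z i \<in> borel_measurable M" if "i \<in> I" for i
    using ind that unfolding indep_vars_def by auto
  have intZ: "integrable M (Z i)" if "i \<in> I" for i
    using square_integrable_imp_integrable[OF meas[OF that] sq[OF that]] .
  define W where "W i x = Z i x - expectation (Z i)" for i x
  have indW: "indep_vars (\<lambda>_. borel) W I"
    unfolding W_def
    by (rule indep_vars_compose2[OF ind, where Y="\<lambda>i y. y - expectation (Z i)"]) auto
  have intW: "integrable M (W i)" if "i \<in> I" for i
    unfolding W_def using intZ[OF that] by auto
  have sqW: "integrable M (\<lambda>x. W i x * W i x)" if "i \<in> I" for i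
  proof -
    have "integrable M (\<lambda>x. (Z i x)\<^sup>2 - 2 * expectation (Z i) * Z i x + (expectation (Z i))\<^sup>2)"
      using sq[OF that] intZ[OF that] by auto
    moreover have "(\<lambda>x. (Z i x)\<^sup>2 - 2 * expectation (Z i) * Z i x + (expectation (Z i))\<^sup>2) = (\<lambda>x. W i x * W i x)"
      by (auto simp: W_def power2_eq_square algebra_simps)
    ultimately show ?thesis by simp
  qed
  have EW: "expectation (W i) = 0" if "i \<in> I" for i
    unfolding W_def using intZ[OF that] by (simp add: prob_space)
  have cross: "expectation (\<lambda>x. W i x * W j x) = 0 \<and> integrable M (\<lambda>x. W i x * W j x)"
    if "i \<in> I" "j \<in> I" "i \<noteq> j" for i j
  proof -
    have ij: "indep_vars (\<lambda>_. borel) W {i, j}"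
      by (rule indep_vars_subset[OF indW]) (use that in auto)
    have p: "(\<lambda>x. \<Prod>k\<in>{i,j}. W k x) = (\<lambda>x. W i x * W j x)"
      using that by auto
    have "expectation (\<lambda>x. \<Prod>k\<in>{i,j}. W k x) = (\<Prod>k\<in>{i,j}. expectation (W k))"
      by (rule indep_vars_lebesgue_integral[OF _ ij]) (use that intW in auto)
    moreover have "integrable M (\<lambda>x. \<Prod>k\<in>{i,j}. W k x)"
      by (rule indep_vars_integrable[OF _ ij]) (use that intW in auto)
    ultimately show ?thesis using p EW that by auto
  qed
  have intWW: "integrable M (\<lambda>x. W i x * W j x)" if "i \<in> I" "j \<in> I" for i j
    using cross sqW that by (cases "i = j") auto
  have ES: "expectation (\<lambda>x. \<Sum>i\<in>I. Z i x) = (\<Sum>i\<in>I. expectation (Z i))"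
    by (rule Bochner_Integration.integral_sum) (use intZ in auto)
  have eq: "(\<lambda>x. ((\<Sum>i\<in>I. Z i x) - expectation (\<lambda>x. \<Sum>i\<in>I. Z i x))\<^sup>2)
      = (\<lambda>x. \<Sum>i\<in>I. \<Sum>j\<in>I. W i x * W j x)"
    unfolding ES W_def power2_eq_square
    by (auto simp: sum_subtractf[symmetric] sum_product)
  have "variance (\<lambda>x. \<Sum>i\<in>I. Z i x) = (\<Sum>i\<in>I. \<Sum>j\<in>I. expectation (\<lambda>x. W i x * W j x))"
    unfolding eq
    by (subst Bochner_Integration.integral_sum, use intWW in \<open>auto intro!: Bochner_Integration.integrable_sum\<close>)
  also have "\<dots> = (\<Sum>i\<in>I. expectation (\<lambda>x. W i x * W i x))"
  proof (rule sum.cong[OF refl])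
    fix i assume i: "i \<in> I"
    have "(\<Sum>j\<in>I. expectation (\<lambda>x. W i x * W j x)) = (\<Sum>j\<in>{i}. expectation (\<lambda>x. W i x * W j x))"
      by (rule sum.mono_neutral_right) (use fin i cross in auto)
    then show "(\<Sum>j\<in>I. expectation (\<lambda>x. W i x * W j x)) = expectation (\<lambda>x. W i x * W i x)" by simp
  qed
  also have "\<dots> = (\<Sum>i\<in>I. variance (Z i))"
    by (auto simp: W_def power2_eq_square)
  finally show ?thesis .
qed


lemma term_bounds:
  fixes v cc S eps :: real and M :: nat
  assumes v: "v \<ge> 0" and cc: "cc > 0" and S: "S > 0" and e: "eps > 0"
    and M: "M = nat (max \<lceil>(1 / eps\<^sup>2) * sqrt (v / cc) * S\<rceil> 1)"
  shows "v / M \<le> eps\<^sup>2 * sqrt (v * cc) / S"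
    and "eps\<^sup>2 * sqrt (v * cc) / S - v / M \<le> eps\<^sup>2 * (eps\<^sup>2 * cc / S\<^sup>2)"
    and "v / M \<ge> 0"
proof -
  show "v / M \<ge> 0" using v by simp
  have both: "v / M \<le> eps\<^sup>2 * sqrt (v * cc) / S \<and> eps\<^sup>2 * sqrt (v * cc) / S - v / M \<le> eps\<^sup>2 * (eps\<^sup>2 * cc / S\<^sup>2)"
  proof (cases "v = 0")
    case True then show ?thesis using e cc S by simp
  next
    case False
    hence vp: "v > 0" using v by simp
    define a where "a = (1 / eps\<^sup>2) * sqrt (v / cc) * S"
    have ap: "a > 0" unfolding a_def using vp cc S e by simp
    have mx: "max \<lceil>a\<rceil> 1 = \<lceil>a\<rceil>" using ap one_le_ceiling[of a] by (intro max_absorb1) blast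
    have Mr: "real M = of_int \<lceil>a\<rceil>" unfolding M a_def[symmetric] mx
      using ap by simp
    have aM: "a \<le> real M" "real M \<le> a + 1" unfolding Mr by linarith+
    have sq: "sqrt (v * cc) = sqrt v * sqrt cc" "sqrt (v / cc) = sqrt v / sqrt cc"
      by (simp_all add: real_sqrt_mult real_sqrt_divide)
    have va: "v / a = eps\<^sup>2 * sqrt (v * cc) / S"
      unfolding a_def sq using vp cc S e
      by (simp add: field_simps)
    have va2: "v / a\<^sup>2 = eps\<^sup>2 * (eps\<^sup>2 * cc / S\<^sup>2)"
      unfolding a_def sq using vp cc S e
      by (simp add: field_simps power2_eq_square)
    have 1: "v / M \<le> v / a" using aM ap vp by (intro divide_left_mono) auto
    have "v / a - v / M \<le> v / a - v / (a + 1)" using aM ap vp by (intro diff_left_mono divide_left_mono) auto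
    also have "\<dots> = v / (a * (a + 1))" using ap by (simp add: field_simps)
    also have "\<dots> \<le> v / a\<^sup>2" using ap vp by (intro divide_left_mono) (auto simp: power2_eq_square)
    finally show ?thesis using 1 va va2 by simp
  qed
  then show "v / M \<le> eps\<^sup>2 * sqrt (v * cc) / S" by simp
  show "eps\<^sup>2 * sqrt (v * cc) / S - v / M \<le> eps\<^sup>2 * (eps\<^sup>2 * cc / S\<^sup>2)" using both by simp
qed

lemma geom_bound:
  fixes g :: real assumes g: "g > 0"
  shows "(\<Sum>l\<le>m. exp (g * real l)) \<le> exp g / (exp g - 1) * exp (g * real m)"
proof (induction m)
  case 0
  have "exp g - 1 > 0" using g by simp
  then show ?case by (simp add: field_simps)
next
  case (Suc m)
  have d: "exp g - 1 > 0" using g by simp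
  have e: "exp (g * real (Suc m)) = exp g * exp (g * real m)"
    by (simp add: exp_add[symmetric] algebra_simps)
  have "(\<Sum>l\<le>Suc m. exp (g * real l)) \<le> exp g / (exp g - 1) * exp (g * real m) + exp (g * real (Suc m))"
    using Suc by simp
  also have "\<dots> = exp g / (exp g - 1) * exp (g * real (Suc m))"
    unfolding e using d by (simp add: field_simps)
  finally show ?case .
qed

lemma Leps_bounds:
  assumes ca: "calpha > 0" and a: "alpha > 0" and e: "0 < eps" "eps < calpha"
  shows "ln (calpha / eps) / alpha \<le> real (Leps calpha alpha eps)"
    and "eps\<^sup>2 \<le> (calpha * exp alpha)\<^sup>2 * exp (- 2 * alpha * real (Leps calpha alpha eps))"
proof -
  define t where "t = ln (calpha / eps) / alpha"
  have tp: "t > 0" unfolding t_def using ca a e by (simp add: divide_simps)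
  have mx: "max \<lceil>t\<rceil> 1 = \<lceil>t\<rceil>" using tp one_le_ceiling[of t] by (intro max_absorb1) blast
  have L: "real (Leps calpha alpha eps) = of_int \<lceil>t\<rceil>"
    unfolding Leps_def t_def[symmetric] mx using tp by simp
  show "ln (calpha / eps) / alpha \<le> real (Leps calpha alpha eps)" unfolding L t_def[symmetric] by linarith
  have "real (Leps calpha alpha eps) < t + 1" unfolding L by linarith
  hence "alpha * real (Leps calpha alpha eps) < ln (calpha / eps) + alpha"
    unfolding t_def using a by (simp add: field_simps)
  hence "exp (alpha * real (Leps calpha alpha eps)) < exp (ln (calpha / eps) + alpha)" by simp
  also have "\<dots> = calpha / eps * exp alpha" using ca e by (simp add: exp_add)
  finally have "eps * exp (alpha * real (Leps calpha alpha eps)) < calpha * exp alpha"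
    using e by (simp add: field_simps)
  hence "eps \<le> calpha * exp alpha * exp (- alpha * real (Leps calpha alpha eps))"
    by (simp add: exp_minus field_simps)
  hence "eps\<^sup>2 \<le> (calpha * exp alpha * exp (- alpha * real (Leps calpha alpha eps)))\<^sup>2"
    using e by (intro power_mono) auto
  also have "\<dots> = (calpha * exp alpha)\<^sup>2 * exp (- 2 * alpha * real (Leps calpha alpha eps))"
    by (simp add: power_mult_distrib exp_double[symmetric] power2_eq_square exp_add[symmetric])
  finally show "eps\<^sup>2 \<le> (calpha * exp alpha)\<^sup>2 * exp (- 2 * alpha * real (Leps calpha alpha eps))" .
qed

lemma Leps_lim:
  assumes ca: "calpha > 0" and a: "alpha > 0"
  shows "filterlim (Leps calpha alpha) sequentially (at_right 0)"
proof -
  have 1: "filterlim (\<lambda>eps. ln (calpha / eps) / alpha) at_top (at_right 0)"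
    using ca a by real_asymp
  have ev: "eventually (\<lambda>eps. 0 < eps \<and> eps < calpha) (at_right (0::real))"
    using ca by (simp add: eventually_at_right_field) (metis)
  have "filterlim (\<lambda>eps. real (Leps calpha alpha eps)) at_top (at_right 0)"
    by (rule filterlim_at_top_mono[OF 1]) (use ev Leps_bounds(1)[OF ca a] in \<open>auto elim: eventually_mono\<close>)
  then show ?thesis by (simp add: filterlim_sequentially_iff_filterlim_real)
qed

lemma h1_bound:
  fixes S :: "nat \<Rightarrow> real" and h1 :: "nat \<Rightarrow> real"
  assumes g: "S k * exp ((u - gamma) * real k / 2) > 1" and Kn: "K \<ge> 0"
  and h1_def: "h1 k = K * exp ((gamma - 2 * alpha) * real k) / (S k)\<^sup>2"
  shows "h1 k \<le> K * exp ((u - 2 * alpha) * real k)"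
proof -
            have z: "(gamma - u) * real k / 2 + (u - gamma) * real k / 2 = 0"
              by (simp add: add_divide_distrib[symmetric] ring_distribs)
            have "exp ((gamma - u) * real k / 2) * (S k * exp ((u - gamma) * real k / 2))
                = S k * (exp ((gamma - u) * real k / 2) * exp ((u - gamma) * real k / 2))"
              by (rule mult.left_commute)
            also have "\<dots> = S k" by (simp only: mult_exp_exp z exp_zero mult_1_right)
            finally have e: "exp ((gamma - u) * real k / 2) * (S k * exp ((u - gamma) * real k / 2)) = S k" .
            have "exp ((gamma - u) * real k / 2) * 1 < exp ((gamma - u) * real k / 2) * (S k * exp ((u - gamma) * real k / 2))"
              by (rule mult_strict_left_mono[OF g exp_gt_zero])
            then have lt: "exp ((gamma - u) * real k / 2) < S k" unfolding e by simp
            then have "(exp ((gamma - u) * real k / 2))\<^sup>2 \<le> (S k)\<^sup>2"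
              by (intro power_mono) auto
            moreover have "(exp ((gamma - u) * real k / 2))\<^sup>2 = exp ((gamma - u) * real k)"
              by (simp add: exp_double[symmetric])
            ultimately have s: "exp ((gamma - u) * real k) \<le> (S k)\<^sup>2" by simp
            have s2: "(S k)\<^sup>2 > 0" using s exp_gt_zero[of "(gamma - u) * real k"] by linarith
            have arg: "(gamma - 2 * alpha) * real k - (gamma - u) * real k = (u - 2 * alpha) * real k"
              by (simp add: algebra_simps)
            have "K * exp ((gamma - 2 * alpha) * real k) / exp ((gamma - u) * real k) = K * exp ((u - 2 * alpha) * real k)"
              unfolding times_divide_eq_right[symmetric] exp_diff[symmetric] arg ..
            have "h1 k \<le> K * exp ((gamma - 2 * alpha) * real k) / exp ((gamma - u) * real k)"
              unfolding h1_def using Kn s s2 by (intro divide_left_mono) auto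
            also note \<open>K * exp ((gamma - 2 * alpha) * real k) / exp ((gamma - u) * real k) = K * exp ((u - 2 * alpha) * real k)\<close>
            finally show ?thesis .
qed


lemma (in prob_space) variance_scale:
  fixes Z :: "'a \<Rightarrow> real"
  shows "variance (\<lambda>x. Z x / c) = variance Z / c\<^sup>2"
proof -
  have "expectation (\<lambda>x. Z x / c) = expectation Z / c" by simp
  moreover have "(\<lambda>x. (Z x / c - expectation Z / c)\<^sup>2) = (\<lambda>x. (Z x - expectation Z)\<^sup>2 / c\<^sup>2)"
    by (auto simp: power_divide diff_divide_distrib[symmetric])
  ultimately show ?thesis by simp
qed

theorem lemma1:
  fixes P :: "'a measure" and Q :: "'b measure"
    and X :: "'a \<Rightarrow> real" and Xl :: "nat \<Rightarrow> 'a \<Rightarrow> real"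
    and Cl :: "nat \<Rightarrow> real"
    and Y :: "nat \<Rightarrow> nat \<Rightarrow> 'b \<Rightarrow> real"
    and alpha beta gamma calpha C c C' :: real
  assumes P: "prob_space P" and Q: "prob_space Q"
    and X_L2: "X \<in> borel_measurable P" "integrable P (\<lambda>\<omega>. (X \<omega>)\<^sup>2)"
    and Xl_L2: "\<And>l. Xl l \<in> borel_measurable P" "\<And>l. integrable P (\<lambda>\<omega>. (Xl l \<omega>)\<^sup>2)"
    and Y_indep: "prob_space.indep_vars Q (\<lambda>_. borel) (\<lambda>(l, i). Y l i) UNIV"
    and Y_law: "\<And>l i. distr Q borel (Y l i) = distr P borel (dX Xl l)"
    (* Assumption A *)
    and pos: "alpha > 0" "beta > 0" "gamma > 0" "min beta gamma \<le> 2 * alpha" "calpha > 0"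
    and bias: "\<And>l. \<bar>integral\<^sup>L P (\<lambda>\<omega>. X \<omega> - Xl l \<omega>)\<bar> \<le> calpha * exp (- alpha * real l)"
    and var: "C > 0" "\<And>l. Vlev P Xl l \<le> C * exp (- beta * real l)"
    and cost: "0 < c" "c < C'"
      "\<And>l. c * exp (gamma * real l) < Cl l" "\<And>l. Cl l < C' * exp (gamma * real l)"
    (* Assumption B *)
    and B0: "Vlev P Xl 0 > 0"
    and B1: "beta = gamma \<Longrightarrow> filterlim (Ssum (Vlev P Xl) Cl) at_top sequentially"
    and B2: "gamma > beta \<Longrightarrow> beta < 2 * alpha \<and>
       (\<exists>u. beta \<le> u \<and> u < 2 * alpha \<and>
          liminf (\<lambda>k. ereal (Ssum (Vlev P Xl) Cl k * exp ((u - gamma) * real k / 2))) > 1)"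
  shows "((\<lambda>eps. prob_space.variance Q (AML (Vlev P Xl) Cl calpha alpha Y eps) / eps\<^sup>2)
            \<longlongrightarrow> 1) (at_right 0)"
proof -
  interpret P: prob_space P by fact
  interpret Q: prob_space Q by fact
  define V where "V = Vlev P Xl"
  define S where "S = Ssum V Cl"
  define L where "L = Leps calpha alpha"
  define M where "M eps = Meps V Cl calpha alpha eps" for eps
  have Vnn: "V l \<ge> 0" for l unfolding V_def Vlev_def by (rule P.variance_positive)
  have Clp: "Cl l > 0" for l using cost(1) cost(3)[of l]
    by (smt (verit) exp_gt_zero mult_pos_pos)
  have S0: "S 0 > 0" unfolding S_def Ssum_def using B0 Clp[of 0] by (simp add: V_def)
  have Smono: "S 0 \<le> S k" for k unfolding S_def Ssum_def
    by (intro sum_mono2) (auto simp: Vnn Clp less_imp_le)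
  have Sp: "S k > 0" for k using S0 Smono[of k] by simp
  have Mge1: "M eps l \<ge> 1" for eps l unfolding M_def Meps_def by simp
  have dXmeas: "dX Xl l \<in> borel_measurable P" for l
    unfolding dX_def using Xl_L2(1) by auto
  have dXsq: "integrable P (\<lambda>x. (dX Xl l x)\<^sup>2)" for l
  proof (rule Bochner_Integration.integrable_bound)
    show "integrable P (\<lambda>x. 2 * (Xl l x)\<^sup>2 + 2 * (Xl (l - 1) x)\<^sup>2)"
      using Xl_L2(2) by (intro Bochner_Integration.integrable_add integrable_mult_right) auto
    show "(\<lambda>x. (dX Xl l x)\<^sup>2) \<in> borel_measurable P" using dXmeas by auto
    have pw: "(a - b)\<^sup>2 \<le> 2 * a\<^sup>2 + 2 * b\<^sup>2" for a b :: real
    proof -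
      have "0 \<le> (a + b)\<^sup>2" by simp
      then show ?thesis unfolding power2_diff power2_sum by linarith
    qed
    show "AE x in P. norm ((dX Xl l x)\<^sup>2) \<le> norm (2 * (Xl l x)\<^sup>2 + 2 * (Xl (l - 1) x)\<^sup>2)"
    proof (rule AE_I2)
      fix x
      have "(dX Xl l x)\<^sup>2 \<le> 2 * (Xl l x)\<^sup>2 + 2 * (Xl (l - 1) x)\<^sup>2"
        unfolding dX_def using pw[of "Xl l x" "Xl (l - 1) x"] pw[of "Xl l x" 0] by (cases "l = 0") auto
      then show "norm ((dX Xl l x)\<^sup>2) \<le> norm (2 * (Xl l x)\<^sup>2 + 2 * (Xl (l - 1) x)\<^sup>2)" by simp
    qed
  qed
  have Ymeas: "Y l i \<in> borel_measurable Q" for l i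
    using Y_indep unfolding Q.indep_vars_def by (auto dest: bspec[of _ _ "(l, i)"])
  have Ysq: "integrable Q (\<lambda>x. (Y l i x)\<^sup>2)" for l i
  proof -
    have "integrable (distr P borel (dX Xl l)) (\<lambda>y. y\<^sup>2)"
      using dXsq[of l] dXmeas[of l] by (subst integrable_distr_eq) auto
    then have "integrable (distr Q borel (Y l i)) (\<lambda>y. y\<^sup>2)" by (simp add: Y_law)
    then show ?thesis using Ymeas[of l i] by (subst (asm) integrable_distr_eq) auto
  qed
  have Yvar: "Q.variance (Y l i) = V l" for l i
  proof -
    have e: "Q.expectation (Y l i) = P.expectation (dX Xl l)"
      using integral_distr[OF Ymeas[of l i], of "\<lambda>y. y"] integral_distr[OF dXmeas[of l], of "\<lambda>y. y"]
      by (simp add: Y_law)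
    show ?thesis
      using integral_distr[OF Ymeas[of l i], of "\<lambda>y. (y - P.expectation (dX Xl l))\<^sup>2"]
        integral_distr[OF dXmeas[of l], of "\<lambda>y. (y - P.expectation (dX Xl l))\<^sup>2"]
      by (simp add: Y_law e V_def Vlev_def)
  qed
  have varf: "Q.variance (AML V Cl calpha alpha Y eps) = (\<Sum>l\<le>L eps. V l / M eps l)" for eps
  proof -
    define I where "I = Sigma {..L eps} (\<lambda>l. {1..M eps l})"
    define Z where "Z p x = Y (fst p) (snd p) x / real (M eps (fst p))" for p x
    have fin: "finite I" unfolding I_def by auto
    have "Q.indep_vars (\<lambda>_. borel) (\<lambda>p x. (\<lambda>y. y / real (M eps (fst p))) ((\<lambda>(l, i). Y l i) p x)) UNIV"
      by (rule Q.indep_vars_compose2[OF Y_indep]) auto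
    moreover have "(\<lambda>p x. (\<lambda>y. y / real (M eps (fst p))) ((\<lambda>(l, i). Y l i) p x)) = Z"
      by (auto simp: Z_def fun_eq_iff split_beta)
    ultimately have indZ: "Q.indep_vars (\<lambda>_. borel) Z I"
      using Q.indep_vars_subset[of "\<lambda>_. borel" Z UNIV I] by simp
    have sqZ: "integrable Q (\<lambda>x. (Z p x)\<^sup>2)" for p
      unfolding Z_def power_divide using Ysq by auto
    have A: "AML V Cl calpha alpha Y eps = (\<lambda>x. \<Sum>p\<in>I. Z p x)"
    proof
      fix x
      have "(\<Sum>p\<in>I. Z p x) = (\<Sum>(l, i)\<in>I. Z (l, i) x)" by (simp add: split_beta)
      also have "\<dots> = (\<Sum>l\<le>L eps. \<Sum>i\<in>{1..M eps l}. Z (l, i) x)"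
        unfolding I_def by (rule sum.Sigma[symmetric]) auto
      also have "\<dots> = AML V Cl calpha alpha Y eps x"
        unfolding AML_def Z_def L_def M_def by (simp add: sum_distrib_left)
      finally show "AML V Cl calpha alpha Y eps x = (\<Sum>p\<in>I. Z p x)" by simp
    qed
    have "Q.variance (AML V Cl calpha alpha Y eps) = (\<Sum>p\<in>I. Q.variance (Z p))"
      unfolding A by (rule Q.var_sum_indep[OF fin indZ sqZ])
    also have "\<dots> = (\<Sum>p\<in>I. V (fst p) / (real (M eps (fst p)))\<^sup>2)"
      unfolding Z_def by (intro sum.cong refl, subst Q.variance_scale) (simp add: Yvar)
    also have "\<dots> = (\<Sum>l\<le>L eps. \<Sum>i\<in>{1..M eps l}. V l / (real (M eps l))\<^sup>2)"
      unfolding I_def by (subst sum.Sigma) (auto simp: split_beta)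
    also have "\<dots> = (\<Sum>l\<le>L eps. V l / M eps l)"
      using Mge1 by (intro sum.cong refl) (auto simp: power2_eq_square field_simps)
    finally show ?thesis .
  qed

  define K0 where "K0 = exp gamma / (exp gamma - 1)"
  define Dc where "Dc = (calpha * exp alpha)\<^sup>2"
  have K0p: "K0 > 0" using pos(3) unfolding K0_def by (simp add: divide_pos_pos)
  have Dcnn: "Dc \<ge> 0" unfolding Dc_def by simp
  have C'p: "C' > 0" using cost(1,2) by simp
  have sumC: "(\<Sum>l\<le>m. Cl l) \<le> C' * K0 * exp (gamma * real m)" for m
  proof -
    have "(\<Sum>l\<le>m. Cl l) \<le> (\<Sum>l\<le>m. C' * exp (gamma * real l))"
      by (intro sum_mono less_imp_le cost(4))
    also have "\<dots> = C' * (\<Sum>l\<le>m. exp (gamma * real l))" by (simp add: sum_distrib_left)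
    also have "\<dots> \<le> C' * (K0 * exp (gamma * real m))"
      using geom_bound[OF pos(3), of m] C'p unfolding K0_def by (intro mult_left_mono) auto
    finally show ?thesis by simp
  qed
  have sumCnn: "(\<Sum>l\<le>m. Cl l) \<ge> 0" for m using Clp by (simp add: less_imp_le sum_nonneg)
  define D where "D eps = 1 - Q.variance (AML V Cl calpha alpha Y eps) / eps\<^sup>2" for eps
  define d where "d eps l = eps\<^sup>2 * sqrt (V l * Cl l) / S (L eps) - V l / M eps l" for eps l
  have sumS: "(\<Sum>l\<le>L eps. sqrt (V l * Cl l)) = S (L eps)" for eps unfolding S_def Ssum_def ..
  have Dform: "D eps = (\<Sum>l\<le>L eps. d eps l) / eps\<^sup>2" if "eps > 0" for eps
  proof -
    have "(\<Sum>l\<le>L eps. eps\<^sup>2 * sqrt (V l * Cl l) / S (L eps)) = eps\<^sup>2 * (\<Sum>l\<le>L eps. sqrt (V l * Cl l)) / S (L eps)"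
      by (simp add: sum_distrib_left sum_divide_distrib)
    also have "\<dots> = eps\<^sup>2" using Sp[of "L eps"] unfolding sumS by simp
    finally have e: "(\<Sum>l\<le>L eps. eps\<^sup>2 * sqrt (V l * Cl l) / S (L eps)) = eps\<^sup>2" .
    show ?thesis unfolding D_def varf d_def sum_subtractf e using that by (simp add: field_simps)
  qed
  have Meq: "M eps l = nat (max \<lceil>(1 / eps\<^sup>2) * sqrt (V l / Cl l) * S (L eps)\<rceil> 1)" for eps l
    unfolding M_def Meps_def S_def L_def ..
  have tb: "V l / M eps l \<le> eps\<^sup>2 * sqrt (V l * Cl l) / S (L eps)"
           "d eps l \<le> eps\<^sup>2 * (eps\<^sup>2 * Cl l / (S (L eps))\<^sup>2)"
           "V l / M eps l \<ge> 0"
     if "eps > 0" for eps l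
     using term_bounds[OF Vnn[of l] Clp[of l] Sp[of "L eps"] that Meq[of eps l]]
     unfolding d_def by auto
  have Dnn: "D eps \<ge> 0" if "eps > 0" for eps
    unfolding Dform[OF that] using tb(1)[OF that] that
    by (intro divide_nonneg_pos sum_nonneg) (auto simp: d_def)
  have Dsplit: "D eps \<le> eps\<^sup>2 * (\<Sum>l\<le>m. Cl l) / (S (L eps))\<^sup>2 + (\<Sum>l\<in>{m<..L eps}. sqrt (V l * Cl l)) / S (L eps)"
    if e: "eps > 0" and m: "m \<le> L eps" for eps m
  proof -
    have U: "{..L eps} = {..m} \<union> {m<..L eps}" using m by auto
    have "(\<Sum>l\<le>L eps. d eps l) = (\<Sum>l\<le>m. d eps l) + (\<Sum>l\<in>{m<..L eps}. d eps l)"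
      unfolding U by (rule sum.union_disjoint) auto
    also have "\<dots> \<le> (\<Sum>l\<le>m. eps\<^sup>2 * (eps\<^sup>2 * Cl l / (S (L eps))\<^sup>2)) + (\<Sum>l\<in>{m<..L eps}. eps\<^sup>2 * sqrt (V l * Cl l) / S (L eps))"
      using tb[OF e] by (intro add_mono sum_mono) (auto simp: d_def)
    also have "\<dots> = eps\<^sup>2 * (eps\<^sup>2 * (\<Sum>l\<le>m. Cl l) / (S (L eps))\<^sup>2 + (\<Sum>l\<in>{m<..L eps}. sqrt (V l * Cl l)) / S (L eps))"
      by (simp only: sum_distrib_left[symmetric] sum_divide_distrib[symmetric] distrib_left) (simp add: times_divide_eq_right)
    finally show ?thesis unfolding Dform[OF e] using e by (simp add: divide_simps mult.commute)
  qed
  have LB: "eps\<^sup>2 \<le> Dc * exp (- 2 * alpha * real (L eps))" if "0 < eps" "eps < calpha" for eps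
    using Leps_bounds(2)[OF pos(5) pos(1) that] unfolding L_def Dc_def .
  have G1: "D eps \<le> Dc * C' * K0 * exp ((gamma - 2 * alpha) * real (L eps)) / (S (L eps))\<^sup>2"
    if e: "0 < eps" "eps < calpha" for eps
  proof -
    have "D eps \<le> eps\<^sup>2 * (\<Sum>l\<le>L eps. Cl l) / (S (L eps))\<^sup>2"
      using Dsplit[OF e(1) order_refl] by simp
    also have "\<dots> \<le> (Dc * exp (- 2 * alpha * real (L eps))) * (C' * K0 * exp (gamma * real (L eps))) / (S (L eps))\<^sup>2"
      by (intro divide_right_mono mult_mono LB[OF e] sumC sumCnn) (use Dcnn in auto)
    also have "\<dots> = Dc * C' * K0 * exp ((gamma - 2 * alpha) * real (L eps)) / (S (L eps))\<^sup>2"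
      by (simp add: mult_exp_exp algebra_simps)
    finally show ?thesis .
  qed
  have S2p: "(S k)\<^sup>2 > 0" for k using Sp[of k] by simp
  have S2mono: "(S 0)\<^sup>2 \<le> (S k)\<^sup>2" for k using Smono[of k] S0 by (intro power_mono) auto
  obtain h where hlim: "h \<longlonglongrightarrow> 0" and hb: "\<And>eps. 0 < eps \<Longrightarrow> eps < calpha \<Longrightarrow> D eps \<le> h (L eps)"
  proof (cases "gamma \<ge> 2 * alpha \<and> beta > gamma")
    case True
    have g2: "gamma = 2 * alpha" using True pos(4) by (auto simp: min_def split: if_splits)
    define dl where "dl = (beta - gamma) / 2"
    have dlp: "dl > 0" using True unfolding dl_def by simp
    define A where "A = Dc * C' * K0 / (S 0)\<^sup>2"
    define B where "B = sqrt (C * C') / S 0"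
    define h2 where "h2 k = A * exp (- (gamma / 2) * real k) + B * ((real k + 1) * exp (- dl * real k / 2))" for k
    have l1: "(\<lambda>k::nat. exp (- (gamma / 2) * real k)) \<longlonglongrightarrow> 0"
      using pos(3) by real_asymp
    have l2: "(\<lambda>k::nat. (real k + 1) * exp (- dl * real k / 2)) \<longlonglongrightarrow> 0"
      using dlp by real_asymp
    have "h2 \<longlonglongrightarrow> A * 0 + B * 0"
      unfolding h2_def by (intro tendsto_intros l1 l2)
    then have h2lim: "h2 \<longlonglongrightarrow> 0" by simp
    have sqb: "sqrt (V l * Cl l) \<le> sqrt (C * C') * exp (- dl * real l)" for l
    proof -
      have "V l * Cl l \<le> (C * exp (- beta * real l)) * (C' * exp (gamma * real l))"
        using var(2)[of l] cost(4)[of l] Vnn[of l] Clp[of l]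
        by (intro mult_mono) (auto simp: V_def)
      also have "\<dots> = (sqrt (C * C') * exp (- dl * real l))\<^sup>2"
        using var(1) C'p unfolding dl_def
        by (simp add: power_mult_distrib power2_eq_square mult_exp_exp algebra_simps)
      finally show ?thesis
        using var(1) C'p by (metis real_sqrt_le_mono real_sqrt_abs abs_of_nonneg exp_ge_zero
            mult_nonneg_nonneg real_sqrt_ge_zero less_imp_le)
    qed
    show ?thesis
    proof (rule that[OF h2lim])
      fix eps assume e: "0 < eps" "eps < calpha"
      define Lk where "Lk = L eps"
      define m where "m = Lk div 2"
      have mL: "m \<le> Lk" "2 * m \<le> Lk" "Lk < 2 * (m + 1)" unfolding m_def by auto
      have p1: "eps\<^sup>2 * (\<Sum>l\<le>m. Cl l) / (S Lk)\<^sup>2 \<le> A * exp (- (gamma / 2) * real Lk)"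
      proof -
        have "eps\<^sup>2 * (\<Sum>l\<le>m. Cl l) / (S Lk)\<^sup>2 \<le> (Dc * exp (- 2 * alpha * real Lk)) * (C' * K0 * exp (gamma * real m)) / (S 0)\<^sup>2"
          using S2p[of 0] S2mono[of Lk] Dcnn C'p K0p
          by (intro frac_le mult_mono LB[OF e, folded Lk_def] sumC sumCnn) auto
        also have "\<dots> = A * exp (gamma * real m - gamma * real Lk)"
          unfolding A_def g2 by (simp add: mult_exp_exp algebra_simps)
        also have "\<dots> \<le> A * exp (- (gamma / 2) * real Lk)"
          using mL(2) pos(3) unfolding A_def using Dcnn C'p K0p S2p[of 0]
          by (intro mult_left_mono) (auto simp: field_simps)
        finally show ?thesis .
      qed
      have p2: "(\<Sum>l\<in>{m<..Lk}. sqrt (V l * Cl l)) / S Lk \<le> B * ((real Lk + 1) * exp (- dl * real Lk / 2))"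
      proof -
        have "(\<Sum>l\<in>{m<..Lk}. sqrt (V l * Cl l)) \<le> (\<Sum>l\<in>{m<..Lk}. sqrt (C * C') * exp (- dl * real Lk / 2))"
        proof (rule sum_mono)
          fix l assume "l \<in> {m<..Lk}"
          then have "real Lk / 2 \<le> real l" using mL by auto
          then have "exp (- dl * real l) \<le> exp (- dl * real Lk / 2)" using dlp by auto
          then show "sqrt (V l * Cl l) \<le> sqrt (C * C') * exp (- dl * real Lk / 2)"
            using sqb[of l] by (meson mult_left_mono order_trans real_sqrt_ge_zero var(1) C'p less_imp_le mult_nonneg_nonneg)
        qed
        also have "\<dots> = real (Lk - m) * (sqrt (C * C') * exp (- dl * real Lk / 2))" by simp
        also have "\<dots> \<le> (real Lk + 1) * (sqrt (C * C') * exp (- dl * real Lk / 2))"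
          using var(1) C'p by (intro mult_right_mono) (auto intro!: mult_nonneg_nonneg)
        finally have "(\<Sum>l\<in>{m<..Lk}. sqrt (V l * Cl l)) / S Lk \<le> (real Lk + 1) * (sqrt (C * C') * exp (- dl * real Lk / 2)) / S 0"
          using Sp[of 0] Smono[of Lk] var(1) C'p by (intro frac_le) (auto intro!: sum_nonneg mult_nonneg_nonneg)
        then show ?thesis unfolding B_def by (simp add: field_simps)
      qed
      have "D eps \<le> eps\<^sup>2 * (\<Sum>l\<le>m. Cl l) / (S Lk)\<^sup>2 + (\<Sum>l\<in>{m<..Lk}. sqrt (V l * Cl l)) / S Lk"
        using Dsplit[OF e(1) mL(1)[unfolded Lk_def]] unfolding Lk_def .
      also have "\<dots> \<le> h2 Lk" unfolding h2_def using p1 p2 by simp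
      finally show "D eps \<le> h2 (L eps)" unfolding Lk_def .
    qed
  next
    case False
    define K where "K = Dc * C' * K0"
    have Kn: "K \<ge> 0" unfolding K_def using Dcnn C'p K0p by simp
    define h1 where "h1 k = K * exp ((gamma - 2 * alpha) * real k) / (S k)\<^sup>2" for k
    have h1n: "h1 k \<ge> 0" for k unfolding h1_def using Kn by simp
    have "h1 \<longlonglongrightarrow> 0"
    proof (cases "gamma < 2 * alpha")
      case True
      have l: "(\<lambda>k::nat. exp ((gamma - 2 * alpha) * real k)) \<longlonglongrightarrow> 0"
        using True by real_asymp
      have "(\<lambda>k. K / (S 0)\<^sup>2 * exp ((gamma - 2 * alpha) * real k)) \<longlonglongrightarrow> K / (S 0)\<^sup>2 * 0"
        by (intro tendsto_intros l)
      then have l': "(\<lambda>k. K / (S 0)\<^sup>2 * exp ((gamma - 2 * alpha) * real k)) \<longlonglongrightarrow> 0" by simp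
      show ?thesis
      proof (rule tendsto_sandwich[OF _ _ tendsto_const l'])
        show "eventually (\<lambda>k. 0 \<le> h1 k) sequentially" using h1n by simp
        show "eventually (\<lambda>k. h1 k \<le> K / (S 0)\<^sup>2 * exp ((gamma - 2 * alpha) * real k)) sequentially"
        proof (intro always_eventually allI)
          fix k
          have "h1 k \<le> K * exp ((gamma - 2 * alpha) * real k) / (S 0)\<^sup>2"
            unfolding h1_def using Kn S2p[of 0] S2p[of k] S2mono[of k] by (intro divide_left_mono) (auto intro: mult_pos_pos)
          then show "h1 k \<le> K / (S 0)\<^sup>2 * exp ((gamma - 2 * alpha) * real k)" by simp
        qed
      qed
    next
      case ng: False
      then have ga: "gamma \<ge> 2 * alpha" by simp
      with False have bg: "beta \<le> gamma" by simp
      show ?thesis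
      proof (cases "beta = gamma")
        case True
        have g2: "gamma = 2 * alpha" using True ga pos(4) by simp
        have Sinf: "filterlim S at_top sequentially" using B1[OF True] unfolding S_def V_def .
        have "filterlim (\<lambda>k. S k * S k) at_top sequentially"
          by (rule filterlim_at_top_mult_at_top[OF Sinf Sinf])
        then have "filterlim (\<lambda>k. (S k)\<^sup>2) at_infinity sequentially"
          by (simp add: power2_eq_square filterlim_at_top_imp_at_infinity)
        then have "(\<lambda>k. K / (S k)\<^sup>2) \<longlonglongrightarrow> 0"
          by (rule tendsto_divide_0[OF tendsto_const])
        moreover have "h1 = (\<lambda>k. K / (S k)\<^sup>2)" unfolding h1_def g2 by auto
        ultimately show ?thesis by simp
      next
        case False
        then have bl: "beta < gamma" using bg by simp
        from B2[OF bl] obtain u where u: "beta \<le> u" "u < 2 * alpha"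
          and lim: "liminf (\<lambda>k. ereal (Ssum (Vlev P Xl) Cl k * exp ((u - gamma) * real k / 2))) > 1"
          by blast
        have ev: "eventually (\<lambda>k. ereal (S k * exp ((u - gamma) * real k / 2)) > 1) sequentially"
          using less_LiminfD[OF lim] unfolding S_def V_def .
        have l: "(\<lambda>k::nat. exp ((u - 2 * alpha) * real k)) \<longlonglongrightarrow> 0"
          using u by real_asymp
        have "(\<lambda>k. K * exp ((u - 2 * alpha) * real k)) \<longlonglongrightarrow> K * 0"
          by (intro tendsto_intros l)
        then have l': "(\<lambda>k. K * exp ((u - 2 * alpha) * real k)) \<longlonglongrightarrow> 0" by simp
        show ?thesis
        proof (rule tendsto_sandwich[OF _ _ tendsto_const l'])
          show "eventually (\<lambda>k. 0 \<le> h1 k) sequentially" using h1n by simp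
          show "eventually (\<lambda>k. h1 k \<le> K * exp ((u - 2 * alpha) * real k)) sequentially"
            using ev
          proof eventually_elim
            case (elim k)
            then have g: "S k * exp ((u - gamma) * real k / 2) > 1" by simp
            show ?case by (rule h1_bound[where S=S and ?h1.0=h1 and k=k, OF g Kn h1_def[of k]])
          qed
        qed
      qed
    qed
    then show ?thesis
    proof (rule that)
      fix eps assume e: "0 < eps" "eps < calpha"
      show "D eps \<le> h1 (L eps)" using G1[OF e] unfolding h1_def K_def .
    qed
  qed
  have Dlim: "(D \<longlongrightarrow> 0) (at_right 0)"
  proof (rule tendsto_sandwich[where f="\<lambda>_. 0" and h="\<lambda>eps. h (L eps)"])
    have ev: "eventually (\<lambda>eps. 0 < eps \<and> eps < calpha) (at_right (0::real))"
      using pos(5) by (simp add: eventually_at_right_field) (metis)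
    show "eventually (\<lambda>eps. 0 \<le> D eps) (at_right 0)" using ev by eventually_elim (use Dnn in auto)
    show "eventually (\<lambda>eps. D eps \<le> h (L eps)) (at_right 0)" using ev by eventually_elim (use hb in auto)
    show "((\<lambda>_. 0) \<longlongrightarrow> (0::real)) (at_right 0)" by simp
    show "((\<lambda>eps. h (L eps)) \<longlongrightarrow> 0) (at_right 0)"
      unfolding L_def by (rule filterlim_compose[OF hlim Leps_lim[OF pos(5) pos(1)]])
  qed
  have "((\<lambda>eps. 1 - D eps) \<longlongrightarrow> 1 - 0) (at_right 0)" by (intro tendsto_intros Dlim)
  then show ?thesis unfolding D_def V_def by simp
qed

end
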